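(* In the setting below, let $F:\widehat{A}\to\widehat{A}'$ and $G:\widehat{A}'\to\widehat{A}''$ be $\mathcal{A}_\infty$-morphisms with $F_n=G_n=0$ for $n>2$ and with $F_2=0$ or $G_2=0$. Then \[ (G\circ F)\boxtimes\mathrm{id}_{DD}=(G\boxtimes\mathrm{id}_{DD})\circ(F\boxtimes\mathrm{id}_{DD}). \]
   Context: $\mathcal{I}=\mathbb{Z}e_1\times\cdots\times\mathbb{Z}e_k$; $\mathcal{B},\mathcal{B}'$ differential bigraded algebras over $\mathcal{I}$ (bigraded by intrinsic and homological degree $\deg_h$, degree-$(0,0)$ part $\mathcal{I}$, differential $\mu_1$ of bidegree $(0,1)$, $\mu_1^2=0$, $\mu_1(xy)=(-1)^{\deg_hy}\mu_1(x)y+x\mu_1(y)$, multiplication $\mu_2$). $\widehat{A},\widehat{A}',\widehat{A}''$ are right dg $\mathcal{B}$-modules (differential $m_1$ of bidegree $(0,1)$, $m_1^2=0$, $m_1(xb)=(-1)^{\deg_hb}m_1(x)b+x\mu_1(b)$, action $m_2$), free over $\mathbb{Z}$ with bases of homogeneous elements with unique right idempotents. $|\mathrm{id}|$ multiplies by $(-1)^{\deg_h}$. $\widehat{DD}=\mathcal{I}$ is a rank-one Type DD bimodule with $\delta_{DD}(1)=\sum_sa_s\otimes c_s^{op}\in\mathcal{B}\otimes_{\mathcal{I}}(\mathcal{B}')^{op}$ of bidegree $(0,1)$ satisfying $\sum_s(-1)^{\deg_hc_s}\mu_1(a_s)\otimes c_s^{op}+\sum_sa_s\otimes\mu_1(c_s)^{op}+\sum_{s,t}(-1)^{\deg_h(a_t)\deg_h(c_s)}a_sa_t\otimes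 c_t^{op}c_s^{op}=0$. $\widehat{A}\boxtimes\widehat{DD}$ is the Type D structure over $\mathcal{B}'$ on $\widehat{A}$ with $\delta(x)=1\otimes m_1(x)+\sum_s(-1)^{\deg_h(xa_s)\deg_h(c_s)}c_s\otimes xa_s$. An $\mathcal{A}_\infty$-morphism $F$ with $F_n=0$ for $n>2$: bigrading-preserving $\mathcal{I}$-linear $F_1$ and $\mathcal{I}$-linear $F_2:\widehat{A}\otimes_{\mathcal{I}}\mathcal{B}\to\widehat{A}'$ (intrinsic-degree preserving, lowering $\deg_h$ by one) with $m_1'F_1=F_1m_1$, $m_1'F_2+m_2'(F_1\otimes\mathrm{id})=F_1m_2-F_2(m_1\otimes|\mathrm{id}|)-F_2(\mathrm{id}\otimes\mu_1)$, $-m_2'(F_2\otimes|\mathrm{id}|)=F_2(m_2\otimes\mathrm{id})-F_2(\mathrm{id}\otimes\mu_2)$. Composition of $\mathcal{A}_\infty$-morphisms: $(G\circ F)_n=\sum_{i+j=n+1}(-1)^{(i+1)(j+1)}G_i\circ(F_j\otimes|\mathrm{id}|^{(j+1)\otimes(i-1)})$; under the hypotheses this gives $(G\circ F)_1=G_1F_1$, $(G\circ F)_2=G_1F_2+G_2(F_1\otimes\mathrm{id})$, and $(G\circ F)_n=0$ for $n>2$. $F\boxtimes\mathrm{id}_{DD}:\widehat{A}\to\mathcal{B}'\otimes\widehat{A}'$ is $x\mapsto1\otimes F_1(x)+\sum_s(-1)^{\deg_h(c_s)(1+\deg_hF_2(x\otimes a_s))}c_s\otimes F_2(x\otimes a_s)$.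 Composition of Type D morphisms $\Phi:D\to\mathcal{B}'\otimes D'$, $\Psi:D'\to\mathcal{B}'\otimes D''$ is $\Psi\circ\Phi:=(\mu_2\otimes\mathrm{id})\circ(\mathrm{id}\otimes\Psi)\circ\Phi$. *)

theory Defs
  imports Main "HOL-Library.Poly_Mapping"
begin

definition signed :: "int \<Rightarrow> 'a::ab_group_add \<Rightarrow> 'a" where
  "signed n a = (if even n then a else - a)"

(* ---------- Differential bigraded algebras over I = Z e_0 x ... x Z e_(k-1) ----------
   G q h = the homogeneous elements of intrinsic degree q and homological degree h *)

definition bigraded_ring :: "(int \<Rightarrow> int \<Rightarrow> 'b::ring_1 set) \<Rightarrow> bool" where
  "bigraded_ring G \<longleftrightarrow>
     (\<forall>q h. 0 \<in> G q h \<and> (\<forall>a\<in>G q h. \<forall>b\<in>G q h. a + b \<in> G q h \<and> - a \<in> G q h)) \<and>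
     (\<forall>a. \<exists>S c. finite S \<and> (\<forall>p\<in>S. c p \<in> G (fst p) (snd p)) \<and> a = (\<Sum>p\<in>S. c p)) \<and>
     (\<forall>S c. finite S \<and> (\<forall>p\<in>S. c p \<in> G (fst p) (snd p)) \<and> (\<Sum>p\<in>S. c p) = 0
              \<longrightarrow> (\<forall>p\<in>S. c p = 0)) \<and>
     (\<forall>q h q' h' a b. a \<in> G q h \<longrightarrow> b \<in> G q' h' \<longrightarrow> a * b \<in> G (q + q') (h + h'))"

definition over_I :: "(int \<Rightarrow> int \<Rightarrow> 'b::ring_1 set) \<Rightarrow> (nat \<Rightarrow> 'b) \<Rightarrow> nat \<Rightarrow> bool" where
  "over_I G e k \<longleftrightarrow>
     (\<forall>i<k. \<forall>j<k. e i * e j = (if i = j then e i else 0)) \<and>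
     (\<Sum>i<k. e i) = 1 \<and>
     (\<forall>n. (\<Sum>i<k. of_int (n i) * e i) = 0 \<longrightarrow> (\<forall>i<k. n i = 0)) \<and>
     G 0 0 = {(\<Sum>i<k. of_int (n i) * e i) | n. True}"

definition hdeg :: "(int \<Rightarrow> int \<Rightarrow> 'b set) \<Rightarrow> 'b \<Rightarrow> int" where
  "hdeg G a = (SOME h. \<exists>q. a \<in> G q h)"

definition dg_bigraded_algebra ::
  "(int \<Rightarrow> int \<Rightarrow> 'b::ring_1 set) \<Rightarrow> ('b \<Rightarrow> 'b) \<Rightarrow> (nat \<Rightarrow> 'b) \<Rightarrow> nat \<Rightarrow> bool" where
  "dg_bigraded_algebra G mu1 e k \<longleftrightarrow>
     bigraded_ring G \<and> over_I G e k \<and>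
     (\<forall>a b. mu1 (a + b) = mu1 a + mu1 b) \<and>
     (\<forall>q h a. a \<in> G q h \<longrightarrow> mu1 a \<in> G q (h + 1)) \<and>
     (\<forall>a. mu1 (mu1 a) = 0) \<and>
     (\<forall>q h a b. b \<in> G q h \<longrightarrow> mu1 (a * b) = signed h (mu1 a * b) + a * mu1 b)"

(* ---------- Right dg modules, free over Z on a basis 'x of homogeneous elements ----------
   gr, dh : bidegree of basis elements; idem : index of the (unique) right idempotent *)

definition homogM :: "('x \<Rightarrow> int) \<Rightarrow> ('x \<Rightarrow> int) \<Rightarrow> int \<Rightarrow> int \<Rightarrow> ('x \<Rightarrow>\<^sub>0 int) \<Rightarrow> bool" where
  "homogM gr dh q h z \<longleftrightarrow> (\<forall>x\<in>Poly_Mapping.keys z. gr x = q \<and> dh x = h)"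

definition hdegM :: "('x \<Rightarrow> int) \<Rightarrow> ('x \<Rightarrow> int) \<Rightarrow> ('x \<Rightarrow>\<^sub>0 int) \<Rightarrow> int" where
  "hdegM gr dh z = (SOME h. \<exists>q. homogM gr dh q h z)"

definition dg_module ::
  "(int \<Rightarrow> int \<Rightarrow> 'b::ring_1 set) \<Rightarrow> ('b \<Rightarrow> 'b) \<Rightarrow> (nat \<Rightarrow> 'b) \<Rightarrow> nat \<Rightarrow>
   ('x \<Rightarrow> int) \<Rightarrow> ('x \<Rightarrow> int) \<Rightarrow> ('x \<Rightarrow> nat) \<Rightarrow>
   (('x \<Rightarrow>\<^sub>0 int) \<Rightarrow> 'b \<Rightarrow> ('x \<Rightarrow>\<^sub>0 int)) \<Rightarrow> (('x \<Rightarrow>\<^sub>0 int) \<Rightarrow> ('x \<Rightarrow>\<^sub>0 int)) \<Rightarrow> bool" where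
  "dg_module G mu1 e k gr dh idem m2 m1 \<longleftrightarrow>
     (\<forall>x. idem x < k \<and> (\<forall>i<k. m2 (frag_of x) (e i) = (if i = idem x then frag_of x else 0))) \<and>
     (\<forall>z z' b. m2 (z + z') b = m2 z b + m2 z' b) \<and>
     (\<forall>z b b'. m2 z (b + b') = m2 z b + m2 z b') \<and>
     (\<forall>z b b'. m2 (m2 z b) b' = m2 z (b * b')) \<and>
     (\<forall>z. m2 z 1 = z) \<and>
     (\<forall>z b q h q' h'. homogM gr dh q h z \<longrightarrow> b \<in> G q' h' \<longrightarrow>
                       homogM gr dh (q + q') (h + h') (m2 z b)) \<and>
     (\<forall>z z'. m1 (z + z') = m1 z + m1 z') \<and>
     (\<forall>z q h. homogM gr dh q h z \<longrightarrow> homogM gr dh q (h + 1) (m1 z)) \<and>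
     (\<forall>z. m1 (m1 z) = 0) \<and>
     (\<forall>z b q h. b \<in> G q h \<longrightarrow> m1 (m2 z b) = signed h (m2 (m1 z) b) + m2 z (mu1 b))"

(* ---------- A-infinity morphisms F with F_n = 0 for n > 2, given by (F1, F2) ---------- *)

definition ainf_morphism ::
  "(int \<Rightarrow> int \<Rightarrow> 'b::ring_1 set) \<Rightarrow> ('b \<Rightarrow> 'b) \<Rightarrow> (nat \<Rightarrow> 'b) \<Rightarrow> nat \<Rightarrow>
   ('x \<Rightarrow> int) \<Rightarrow> ('x \<Rightarrow> int) \<Rightarrow>
   (('x \<Rightarrow>\<^sub>0 int) \<Rightarrow> 'b \<Rightarrow> ('x \<Rightarrow>\<^sub>0 int)) \<Rightarrow> (('x \<Rightarrow>\<^sub>0 int) \<Rightarrow> ('x \<Rightarrow>\<^sub>0 int)) \<Rightarrow>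
   ('y \<Rightarrow> int) \<Rightarrow> ('y \<Rightarrow> int) \<Rightarrow>
   (('y \<Rightarrow>\<^sub>0 int) \<Rightarrow> 'b \<Rightarrow> ('y \<Rightarrow>\<^sub>0 int)) \<Rightarrow> (('y \<Rightarrow>\<^sub>0 int) \<Rightarrow> ('y \<Rightarrow>\<^sub>0 int)) \<Rightarrow>
   (('x \<Rightarrow>\<^sub>0 int) \<Rightarrow> ('y \<Rightarrow>\<^sub>0 int)) \<Rightarrow> (('x \<Rightarrow>\<^sub>0 int) \<Rightarrow> 'b \<Rightarrow> ('y \<Rightarrow>\<^sub>0 int)) \<Rightarrow> bool" where
  "ainf_morphism G mu1 e k gr dh m2 m1 gr' dh' m2' m1' F1 F2 \<longleftrightarrow>
     (\<forall>z z'. F1 (z + z') = F1 z + F1 z') \<and>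
     (\<forall>z q h. homogM gr dh q h z \<longrightarrow> homogM gr' dh' q h (F1 z)) \<and>
     (\<forall>z i. i < k \<longrightarrow> F1 (m2 z (e i)) = m2' (F1 z) (e i)) \<and>
     (\<forall>z z' b. F2 (z + z') b = F2 z b + F2 z' b) \<and>
     (\<forall>z b b'. F2 z (b + b') = F2 z b + F2 z b') \<and>
     (\<forall>z b i. i < k \<longrightarrow> F2 (m2 z (e i)) b = F2 z (e i * b)) \<and>
     (\<forall>z b i. i < k \<longrightarrow> F2 z (b * e i) = m2' (F2 z b) (e i)) \<and>
     (\<forall>z b q h q' h'. homogM gr dh q h z \<longrightarrow> b \<in> G q' h' \<longrightarrow>
                       homogM gr' dh' (q + q') (h + h' - 1) (F2 z b)) \<and>
     (\<forall>z. m1' (F1 z) = F1 (m1 z)) \<and>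
     (\<forall>z b q h. b \<in> G q h \<longrightarrow>
        m1' (F2 z b) + m2' (F1 z) b = F1 (m2 z b) - F2 (m1 z) (signed h b) - F2 z (mu1 b)) \<and>
     (\<forall>z b b' q h q' h'. b \<in> G q h \<longrightarrow> b' \<in> G q' h' \<longrightarrow>
        - m2' (F2 z b) (signed h' b') = F2 (m2 z b) b' - F2 z (b * b'))"

definition ainf_comp1 where "ainf_comp1 G1 F1 = (\<lambda>z. G1 (F1 z))"
definition ainf_comp2 where "ainf_comp2 G1 G2 F1 F2 = (\<lambda>z b. G1 (F2 z b) + G2 (F1 z) b)"

(* ---------- Tensor products over I ----------
   Elements of M \<otimes>_I N are represented by formal Z-combinations of pairs, i.e. elements of
   (M x N) =>0 int, modulo the subgroup generated by biadditivity and I-balancing relations.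
   R a i = a . e_i (right I-action on M), L i n = e_i . n (left I-action on N). *)

inductive_set gen_subgroup :: "'a::ab_group_add set \<Rightarrow> 'a set" for R where
  gen_zero: "0 \<in> gen_subgroup R"
| gen_base: "r \<in> R \<Longrightarrow> r \<in> gen_subgroup R"
| gen_diff: "x \<in> gen_subgroup R \<Longrightarrow> y \<in> gen_subgroup R \<Longrightarrow> x - y \<in> gen_subgroup R"

definition tensor_rels ::
  "('m::ab_group_add \<Rightarrow> nat \<Rightarrow> 'm) \<Rightarrow> (nat \<Rightarrow> 'n::ab_group_add \<Rightarrow> 'n) \<Rightarrow> nat \<Rightarrow> (('m \<times> 'n) \<Rightarrow>\<^sub>0 int) set" where
  "tensor_rels R L k =
     {frag_of (a + a', b) - frag_of (a, b) - frag_of (a', b) | a a' b. True} \<union>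
     {frag_of (a, b + b') - frag_of (a, b) - frag_of (a, b') | a b b'. True} \<union>
     {frag_of (R a i, b) - frag_of (a, L i b) | a b i. i < k}"

definition tensor_eq ::
  "('m::ab_group_add \<Rightarrow> nat \<Rightarrow> 'm) \<Rightarrow> (nat \<Rightarrow> 'n::ab_group_add \<Rightarrow> 'n) \<Rightarrow> nat \<Rightarrow>
   (('m \<times> 'n) \<Rightarrow>\<^sub>0 int) \<Rightarrow> (('m \<times> 'n) \<Rightarrow>\<^sub>0 int) \<Rightarrow> bool" where
  "tensor_eq R L k s t \<longleftrightarrow> s - t \<in> gen_subgroup (tensor_rels R L k)"

(* ---------- The Type DD identity element delta_DD(1) = Sum_s a_s (x) c_s^op ----------
   given as a list ds of pairs (a_s, c_s); B'^op carries the same bigrading as B'. *)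

definition DD_relation_term ::
  "(int \<Rightarrow> int \<Rightarrow> 'b::ring_1 set) \<Rightarrow> ('b \<Rightarrow> 'b) \<Rightarrow>
   (int \<Rightarrow> int \<Rightarrow> 'c::ring_1 set) \<Rightarrow> ('c \<Rightarrow> 'c) \<Rightarrow> ('b \<times> 'c) list \<Rightarrow> (('b \<times> 'c) \<Rightarrow>\<^sub>0 int)" where
  "DD_relation_term G mu1 G' mu1' ds =
     (\<Sum>(a, c)\<leftarrow>ds. frag_of (signed (hdeg G' c) (mu1 a), c)) +
     (\<Sum>(a, c)\<leftarrow>ds. frag_of (a, mu1' c)) +
     (\<Sum>(as, cs)\<leftarrow>ds. \<Sum>(at, ct)\<leftarrow>ds. frag_of (signed (hdeg G at * hdeg G' cs) (as * at), cs * ct))"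

definition DD_identity ::
  "(int \<Rightarrow> int \<Rightarrow> 'b::ring_1 set) \<Rightarrow> ('b \<Rightarrow> 'b) \<Rightarrow> (nat \<Rightarrow> 'b) \<Rightarrow>
   (int \<Rightarrow> int \<Rightarrow> 'c::ring_1 set) \<Rightarrow> ('c \<Rightarrow> 'c) \<Rightarrow> (nat \<Rightarrow> 'c) \<Rightarrow> nat \<Rightarrow> ('b \<times> 'c) list \<Rightarrow> bool" where
  "DD_identity G mu1 e G' mu1' e' k ds \<longleftrightarrow>
     (\<forall>(a, c)\<in>set ds. \<exists>q h q' h'. a \<in> G q h \<and> c \<in> G' q' h' \<and> q + q' = 0 \<and> h + h' = 1) \<and>
     tensor_eq (\<lambda>a i. a * e i) (\<lambda>i c. c * e' i) k (DD_relation_term G mu1 G' mu1' ds) 0"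

definition box_id ::
  "(int \<Rightarrow> int \<Rightarrow> 'c::ring_1 set) \<Rightarrow> ('y \<Rightarrow> int) \<Rightarrow> ('y \<Rightarrow> int) \<Rightarrow>
   (('x \<Rightarrow>\<^sub>0 int) \<Rightarrow> ('y \<Rightarrow>\<^sub>0 int)) \<Rightarrow> (('x \<Rightarrow>\<^sub>0 int) \<Rightarrow> 'b \<Rightarrow> ('y \<Rightarrow>\<^sub>0 int)) \<Rightarrow>
   ('b \<times> 'c) list \<Rightarrow> 'x \<Rightarrow> (('c \<times> ('y \<Rightarrow>\<^sub>0 int)) \<Rightarrow>\<^sub>0 int)" where
  "box_id G' gr' dh' F1 F2 ds x =
     frag_of (1, F1 (frag_of x)) +
     (\<Sum>(a, c)\<leftarrow>ds. frag_of (signed (hdeg G' c * (1 + hdegM gr' dh' (F2 (frag_of x) a))) c,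
                               F2 (frag_of x) a))"

(* composition Psi o Phi := (mu_2 \<otimes> id) o (id \<otimes> Psi) o Phi, with Psi extended Z-linearly *)
definition typeD_comp ::
  "('y \<Rightarrow> (('c::ring_1 \<times> ('z \<Rightarrow>\<^sub>0 int)) \<Rightarrow>\<^sub>0 int)) \<Rightarrow>
   ('x \<Rightarrow> (('c \<times> ('y \<Rightarrow>\<^sub>0 int)) \<Rightarrow>\<^sub>0 int)) \<Rightarrow> 'x \<Rightarrow> (('c \<times> ('z \<Rightarrow>\<^sub>0 int)) \<Rightarrow>\<^sub>0 int)" where
  "typeD_comp Psi Phi x =
     frag_extend (\<lambda>(b, y). frag_extend (\<lambda>w. frag_extend (\<lambda>(c, z). frag_of (b * c, z)) (Psi w)) y) (Phi x)"

end

theory Submission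
  imports Defs
begin
lemma gs_add: "x \<in> gen_subgroup S \<Longrightarrow> y \<in> gen_subgroup S \<Longrightarrow> x + y \<in> gen_subgroup S"
  by (metis diff_0 diff_minus_eq_add gen_diff gen_zero)
lemma gs_neg: "y \<in> gen_subgroup S \<Longrightarrow> - y \<in> gen_subgroup S"
  by (metis diff_0 gen_diff gen_zero)

lemma te_refl: "tensor_eq R L k s s" by (simp add: tensor_eq_def gen_zero)
lemma te_sym: "tensor_eq R L k s t \<Longrightarrow> tensor_eq R L k t s"
  unfolding tensor_eq_def by (metis gs_neg minus_diff_eq)
lemma te_trans: "tensor_eq R L k s t \<Longrightarrow> tensor_eq R L k t u \<Longrightarrow> tensor_eq R L k s u"
proof -
  assume "tensor_eq R L k s t" "tensor_eq R L k t u"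
  then have "(s - t) + (t - u) \<in> gen_subgroup (tensor_rels R L k)"
    unfolding tensor_eq_def by (rule gs_add)
  then show ?thesis unfolding tensor_eq_def by simp
qed
declare te_trans[trans]

lemma te_add: "tensor_eq R L k s t \<Longrightarrow> tensor_eq R L k s' t' \<Longrightarrow> tensor_eq R L k (s + s') (t + t')"
proof -
  assume "tensor_eq R L k s t" "tensor_eq R L k s' t'"
  then have "(s - t) + (s' - t') \<in> gen_subgroup (tensor_rels R L k)"
    unfolding tensor_eq_def by (rule gs_add)
  moreover have "(s - t) + (s' - t') = (s + s') - (t + t')" by (simp add: algebra_simps)
  ultimately show ?thesis unfolding tensor_eq_def by simp
qed
lemma te_diff: "tensor_eq R L k s t \<Longrightarrow> tensor_eq R L k s' t' \<Longrightarrow> tensor_eq R L k (s - s') (t - t')"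
proof -
  assume "tensor_eq R L k s t" "tensor_eq R L k s' t'"
  then have "(s - t) - (s' - t') \<in> gen_subgroup (tensor_rels R L k)"
    unfolding tensor_eq_def by (rule gen_diff)
  moreover have "(s - t) - (s' - t') = (s - s') - (t - t')" by (simp add: algebra_simps)
  ultimately show ?thesis unfolding tensor_eq_def by simp
qed
lemma te_right_add: "tensor_eq R L k (frag_of (a, b + b')) (frag_of (a, b) + frag_of (a, b'))"
proof -
  have "frag_of (a, b + b') - frag_of (a, b) - frag_of (a, b') \<in> tensor_rels R L k"
    unfolding tensor_rels_def by blast
  then show ?thesis unfolding tensor_eq_def by (metis gen_base diff_diff_eq)
qed
lemma te_right_zero: "tensor_eq R L k (frag_of (a, 0)) 0"
proof -
  have "frag_of (a, 0 + 0) - frag_of (a, 0) - frag_of (a, 0) \<in> tensor_rels R L k"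
    unfolding tensor_rels_def by blast
  then have "- frag_of (a, 0) \<in> gen_subgroup (tensor_rels R L k)" by (simp add: gen_base)
  then show ?thesis unfolding tensor_eq_def by (metis gs_neg minus_minus diff_zero)
qed
lemma te_right_diff: "tensor_eq R L k (frag_of (a, u - v)) (frag_of (a, u) - frag_of (a, v))"
proof -
  have "frag_of (a, (u - v) + v) - frag_of (a, u - v) - frag_of (a, v) \<in> tensor_rels R L k"
    unfolding tensor_rels_def by blast
  then have "frag_of (a, u) - frag_of (a, u - v) - frag_of (a, v) \<in> gen_subgroup (tensor_rels R L k)"
    by (simp add: gen_base)
  then have "- (frag_of (a, u) - frag_of (a, u - v) - frag_of (a, v)) \<in> gen_subgroup (tensor_rels R L k)"
    by (rule gs_neg)
  then show ?thesis unfolding tensor_eq_def by (simp add: algebra_simps)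
qed

lemma te_ext_lin:
  assumes lin: "\<And>u v. Lm (u + v) = Lm u + Lm v"
  shows "tensor_eq R L k (frag_extend (\<lambda>w. frag_of (b, Lm (frag_of w))) y) (frag_of (b, Lm y))"
proof -
  have L0: "Lm 0 = 0" using lin[of 0 0] by simp
  have Ld: "Lm (u - v) = Lm u - Lm v" for u v using lin[of "u - v" v] by (simp add: algebra_simps)
  have "Poly_Mapping.keys y \<subseteq> UNIV" by simp
  then show ?thesis
  proof (induction y rule: frag_induction)
    case zero
    then show ?case using te_sym[OF te_right_zero] L0 by simp
  next
    case (one x)
    then show ?case by (simp add: te_refl)
  next
    case (diff a c)
    have "tensor_eq R L k (frag_extend (\<lambda>w. frag_of (b, Lm (frag_of w))) a - frag_extend (\<lambda>w. frag_of (b, Lm (frag_of w))) c)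
        (frag_of (b, Lm a) - frag_of (b, Lm c))" by (rule te_diff[OF diff.IH])
    also have "tensor_eq R L k ... (frag_of (b, Lm a - Lm c))" by (rule te_sym[OF te_right_diff])
    finally show ?case by (simp add: frag_extend_diff Ld)
  qed
qed

lemma te_frag_extend_cong:
  assumes "Poly_Mapping.keys y \<subseteq> S" "\<And>w. w \<in> S \<Longrightarrow> tensor_eq R L k (f w) (g w)"
  shows "tensor_eq R L k (frag_extend f y) (frag_extend g y)"
  using assms(1)
proof (induction y rule: frag_induction)
  case zero then show ?case by (simp add: te_refl)
next
  case (one x) then show ?case using assms(2) by simp
next
  case (diff a b) then show ?case by (simp add: frag_extend_diff te_diff)
qed

lemma frag_extend_fadd: "frag_extend (\<lambda>w. f w + g w) y = frag_extend f y + frag_extend g y"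
  by (simp add: frag_extend_def sum.distrib frag_cmul_distrib2)

lemma frag_extend_fsumlist:
  "frag_extend (\<lambda>w. sum_list (map (\<lambda>p. h p w) ds)) y = sum_list (map (\<lambda>p. frag_extend (h p) y) ds)"
  by (induction ds) (simp_all add: frag_extend_fadd frag_extend_eq_0)

lemma frag_extend_sumlist_arg:
  "frag_extend f (sum_list (map g ds)) = sum_list (map (\<lambda>p. frag_extend f (g p)) ds)"
  by (induction ds) (simp_all add: frag_extend_add)

lemma te_sumlist_cong:
  "(\<And>p. p \<in> set ds \<Longrightarrow> tensor_eq R L k (f p) (g p)) \<Longrightarrow>
   tensor_eq R L k (sum_list (map f ds)) (sum_list (map g ds))"
  by (induction ds) (simp_all add: te_refl te_add)

lemma sumlist_zero: "(\<And>p. p \<in> set ds \<Longrightarrow> f p = 0) \<Longrightarrow> sum_list (map f ds) = 0"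
  by (induction ds) auto

lemma frag_extend_one': "frag_extend (\<lambda>(c, z). frag_of (c, z)) u = u"
proof -
  have e: "(\<lambda>(c, z). frag_of (c, z)) = frag_of" by auto
  show ?thesis by (subst e) (rule frag_expansion[symmetric])
qed

lemma frag_extend_one: "frag_extend (\<lambda>(c, z). frag_of ((1::'c::ring_1) * c, z)) u = u"
  unfolding mult_1_left by (rule frag_extend_one')

lemma hdegM_eq: assumes "homogM gr dh q h z" "z \<noteq> 0" shows "hdegM gr dh z = h"
proof -
  obtain x where x: "x \<in> Poly_Mapping.keys z" using assms(2) by (metis keys_eq_empty ex_in_conv)
  have "\<exists>q. homogM gr dh q (hdegM gr dh z) z"
    unfolding hdegM_def by (rule someI_ex) (use assms(1) in blast)
  then show ?thesis using assms(1) x unfolding homogM_def by metis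
qed

lemma hsign:
  assumes "homogM gr dh q h y" "y = 0 \<Longrightarrow> z = 0"
  shows "tensor_eq R L k (frag_of (signed (d * (1 + hdegM gr dh y)) c, z)) (frag_of (signed (d * (1 + h)) c, z))"
proof (cases "y = 0")
  case True
  then show ?thesis using assms(2) te_right_zero te_sym te_trans by metis
next
  case False
  then show ?thesis using hdegM_eq[OF assms(1) False] by (simp add: te_refl)
qed

lemma homogM_frag_of: "homogM gr dh (gr x) (dh x) (frag_of x)"
  by (simp add: homogM_def)
lemma homogM_key: "homogM gr dh q h z \<Longrightarrow> w \<in> Poly_Mapping.keys z \<Longrightarrow> gr w = q \<and> dh w = h"
  by (simp add: homogM_def)
theorem proposition6p51:
  fixes k :: nat
    and GB :: "int \<Rightarrow> int \<Rightarrow> 'b::ring_1 set" and mu1 :: "'b \<Rightarrow> 'b" and e :: "nat \<Rightarrow> 'b"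
    and GB' :: "int \<Rightarrow> int \<Rightarrow> 'c::ring_1 set" and mu1' :: "'c \<Rightarrow> 'c" and e' :: "nat \<Rightarrow> 'c"
    and gr :: "'x \<Rightarrow> int" and dh :: "'x \<Rightarrow> int" and idem :: "'x \<Rightarrow> nat"
    and m2 :: "('x \<Rightarrow>\<^sub>0 int) \<Rightarrow> 'b \<Rightarrow> ('x \<Rightarrow>\<^sub>0 int)" and m1 :: "('x \<Rightarrow>\<^sub>0 int) \<Rightarrow> ('x \<Rightarrow>\<^sub>0 int)"
    and gr' :: "'y \<Rightarrow> int" and dh' :: "'y \<Rightarrow> int" and idem' :: "'y \<Rightarrow> nat"
    and m2' :: "('y \<Rightarrow>\<^sub>0 int) \<Rightarrow> 'b \<Rightarrow> ('y \<Rightarrow>\<^sub>0 int)" and m1' :: "('y \<Rightarrow>\<^sub>0 int) \<Rightarrow> ('y \<Rightarrow>\<^sub>0 int)"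
    and gr'' :: "'z \<Rightarrow> int" and dh'' :: "'z \<Rightarrow> int" and idem'' :: "'z \<Rightarrow> nat"
    and m2'' :: "('z \<Rightarrow>\<^sub>0 int) \<Rightarrow> 'b \<Rightarrow> ('z \<Rightarrow>\<^sub>0 int)" and m1'' :: "('z \<Rightarrow>\<^sub>0 int) \<Rightarrow> ('z \<Rightarrow>\<^sub>0 int)"
    and ds :: "('b \<times> 'c) list"
    and F1 :: "('x \<Rightarrow>\<^sub>0 int) \<Rightarrow> ('y \<Rightarrow>\<^sub>0 int)" and F2 :: "('x \<Rightarrow>\<^sub>0 int) \<Rightarrow> 'b \<Rightarrow> ('y \<Rightarrow>\<^sub>0 int)"
    and G1 :: "('y \<Rightarrow>\<^sub>0 int) \<Rightarrow> ('z \<Rightarrow>\<^sub>0 int)" and G2 :: "('y \<Rightarrow>\<^sub>0 int) \<Rightarrow> 'b \<Rightarrow> ('z \<Rightarrow>\<^sub>0 int)"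
  assumes B: "dg_bigraded_algebra GB mu1 e k"
    and B': "dg_bigraded_algebra GB' mu1' e' k"
    and A: "dg_module GB mu1 e k gr dh idem m2 m1"
    and A': "dg_module GB mu1 e k gr' dh' idem' m2' m1'"
    and A'': "dg_module GB mu1 e k gr'' dh'' idem'' m2'' m1''"
    and DD: "DD_identity GB mu1 e GB' mu1' e' k ds"
    and F: "ainf_morphism GB mu1 e k gr dh m2 m1 gr' dh' m2' m1' F1 F2"
    and G: "ainf_morphism GB mu1 e k gr' dh' m2' m1' gr'' dh'' m2'' m1'' G1 G2"
    and F2_or_G2: "F2 = (\<lambda>z b. 0) \<or> G2 = (\<lambda>z b. 0)"
  shows "\<forall>x. tensor_eq (\<lambda>b i. b * e' i) (\<lambda>i z. m2'' z (e i)) k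
           (box_id GB' gr'' dh'' (ainf_comp1 G1 F1) (ainf_comp2 G1 G2 F1 F2) ds x)
           (typeD_comp (box_id GB' gr'' dh'' G1 G2 ds) (box_id GB' gr' dh' F1 F2 ds) x)"

proof
  fix x :: 'x
  define X where "X = frag_of x"
  have G1add: "\<And>u v. G1 (u + v) = G1 u + G1 v" using G unfolding ainf_morphism_def by auto
  have G1hom: "\<And>z q h. homogM gr' dh' q h z \<Longrightarrow> homogM gr'' dh'' q h (G1 z)"
    using G unfolding ainf_morphism_def by auto
  have G2add: "\<And>b u v. G2 (u + v) b = G2 u b + G2 v b" using G unfolding ainf_morphism_def by auto
  have G2hom: "\<And>z b q h q' h'. homogM gr' dh' q h z \<Longrightarrow> b \<in> GB q' h' \<Longrightarrow>
      homogM gr'' dh'' (q + q') (h + h' - 1) (G2 z b)"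
    using G unfolding ainf_morphism_def by auto
  have F1add: "\<And>u v. F1 (u + v) = F1 u + F1 v" using F unfolding ainf_morphism_def by auto
  have F1hom: "\<And>z q h. homogM gr dh q h z \<Longrightarrow> homogM gr' dh' q h (F1 z)"
    using F unfolding ainf_morphism_def by auto
  have F2hom: "\<And>z b q h q' h'. homogM gr dh q h z \<Longrightarrow> b \<in> GB q' h' \<Longrightarrow>
      homogM gr' dh' (q + q') (h + h' - 1) (F2 z b)"
    using F unfolding ainf_morphism_def by auto
  have G10: "G1 0 = 0" using G1add[of 0 0] by simp
  have dsdeg: "\<exists>q. a \<in> GB q (hdeg GB a)" if "(a, c) \<in> set ds" for a c
  proof -
    from DD that have "\<exists>q h. a \<in> GB q h" unfolding DD_identity_def by fastforce
    then obtain q0 h0 where "a \<in> GB q0 h0" by blast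
    then show ?thesis unfolding hdeg_def using someI_ex[of "\<lambda>h. \<exists>q. a \<in> GB q h"] by blast
  qed
  have hX: "homogM gr dh (gr x) (dh x) X" unfolding X_def by (rule homogM_frag_of)
  have hF1: "homogM gr' dh' (gr x) (dh x) (F1 X)" using F1hom[OF hX] .
  from F2_or_G2 show "tensor_eq (\<lambda>b i. b * e' i) (\<lambda>i z. m2'' z (e i)) k
           (box_id GB' gr'' dh'' (ainf_comp1 G1 F1) (ainf_comp2 G1 G2 F1 F2) ds x)
           (typeD_comp (box_id GB' gr'' dh'' G1 G2 ds) (box_id GB' gr' dh' F1 F2 ds) x)"
  proof
    assume F20: "F2 = (\<lambda>z b. 0)"
    have Phi: "box_id GB' gr' dh' F1 F2 ds x = frag_of (1, F1 X) +
       (\<Sum>(a,c)\<leftarrow>ds. frag_of (signed (hdeg GB' c * (1 + hdegM gr' dh' 0)) c, 0))"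
      by (simp add: box_id_def F20 X_def)
    have s1: "typeD_comp (box_id GB' gr'' dh'' G1 G2 ds) (box_id GB' gr' dh' F1 F2 ds) x
       = frag_extend (box_id GB' gr'' dh'' G1 G2 ds) (F1 X)"
      unfolding typeD_comp_def Phi
      by (simp add: frag_extend_add frag_extend_sumlist_arg frag_extend_one frag_extend_one' sumlist_zero split_beta)
    let ?te = "tensor_eq (\<lambda>b i. b * e' i) (\<lambda>i z. m2'' z (e i)) k"
    define \<sigma> where "\<sigma> a c = signed (hdeg GB' c * (1 + (dh x + hdeg GB a - 1))) c" for a c
    have s3: "?te (frag_extend (box_id GB' gr'' dh'' G1 G2 ds) (F1 X))
       (frag_extend (\<lambda>w. frag_of (1, G1 (frag_of w)) + (\<Sum>(a,c)\<leftarrow>ds. frag_of (\<sigma> a c, G2 (frag_of w) a))) (F1 X))"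
    proof (rule te_frag_extend_cong[OF order_refl])
      fix w assume w: "w \<in> Poly_Mapping.keys (F1 X)"
      have gw: "gr' w = gr x" "dh' w = dh x" using homogM_key[OF hF1 w] by auto
      show "?te (box_id GB' gr'' dh'' G1 G2 ds w)
         (frag_of (1, G1 (frag_of w)) + (\<Sum>(a,c)\<leftarrow>ds. frag_of (\<sigma> a c, G2 (frag_of w) a)))"
        unfolding box_id_def
      proof (rule te_add[OF te_refl], rule te_sumlist_cong, clarify)
        fix a c assume ac: "(a, c) \<in> set ds"
        obtain q where q: "a \<in> GB q (hdeg GB a)" using dsdeg[OF ac] by blast
        have "homogM gr'' dh'' (gr x + q) (dh x + hdeg GB a - 1) (G2 (frag_of w) a)"
          using G2hom[OF homogM_frag_of[of gr' dh' w] q] gw by simp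
        then show "?te (frag_of (signed (hdeg GB' c * (1 + hdegM gr'' dh'' (G2 (frag_of w) a))) c, G2 (frag_of w) a))
            (frag_of (\<sigma> a c, G2 (frag_of w) a))"
          unfolding \<sigma>_def by (rule hsign) simp
      qed
    qed
    have s4: "frag_extend (\<lambda>w. frag_of (1, G1 (frag_of w)) + (\<Sum>(a,c)\<leftarrow>ds. frag_of (\<sigma> a c, G2 (frag_of w) a))) (F1 X)
       = frag_extend (\<lambda>w. frag_of (1, G1 (frag_of w))) (F1 X) +
         (\<Sum>p\<leftarrow>ds. frag_extend (\<lambda>w. frag_of (\<sigma> (fst p) (snd p), G2 (frag_of w) (fst p))) (F1 X))"
      by (simp add: frag_extend_fadd frag_extend_fsumlist split_beta)
    have s5: "?te (frag_extend (\<lambda>w. frag_of (1, G1 (frag_of w))) (F1 X) +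
         (\<Sum>p\<leftarrow>ds. frag_extend (\<lambda>w. frag_of (\<sigma> (fst p) (snd p), G2 (frag_of w) (fst p))) (F1 X)))
         (frag_of (1, G1 (F1 X)) + (\<Sum>p\<leftarrow>ds. frag_of (\<sigma> (fst p) (snd p), G2 (F1 X) (fst p))))"
    proof (rule te_add)
      show "?te (frag_extend (\<lambda>w. frag_of (1, G1 (frag_of w))) (F1 X)) (frag_of (1, G1 (F1 X)))"
        by (rule te_ext_lin) (rule G1add)
      show "?te (\<Sum>p\<leftarrow>ds. frag_extend (\<lambda>w. frag_of (\<sigma> (fst p) (snd p), G2 (frag_of w) (fst p))) (F1 X))
         (\<Sum>p\<leftarrow>ds. frag_of (\<sigma> (fst p) (snd p), G2 (F1 X) (fst p)))"
        by (rule te_sumlist_cong, rule te_ext_lin[where Lm="\<lambda>u. G2 u _"]) (rule G2add)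
    qed
    have s6: "?te (box_id GB' gr'' dh'' (ainf_comp1 G1 F1) (ainf_comp2 G1 G2 F1 F2) ds x)
         (frag_of (1, G1 (F1 X)) + (\<Sum>p\<leftarrow>ds. frag_of (\<sigma> (fst p) (snd p), G2 (F1 X) (fst p))))"
      unfolding box_id_def ainf_comp1_def ainf_comp2_def F20 G10 X_def[symmetric] add_0_left
    proof (rule te_add[OF te_refl], rule te_sumlist_cong, clarify)
      fix a c assume ac: "(a, c) \<in> set ds"
      obtain q where q: "a \<in> GB q (hdeg GB a)" using dsdeg[OF ac] by blast
      have "homogM gr'' dh'' (gr x + q) (dh x + hdeg GB a - 1) (G2 (F1 X) a)"
        using G2hom[OF hF1 q] by simp
      then show "?te (frag_of (signed (hdeg GB' c * (1 + hdegM gr'' dh'' (G2 (F1 X) a))) c, G2 (F1 X) a))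
          (frag_of (\<sigma> (fst (a, c)) (snd (a, c)), G2 (F1 X) (fst (a, c))))"
        unfolding \<sigma>_def fst_conv snd_conv by (rule hsign) simp
    qed
    show ?thesis
      unfolding s1 by (rule te_trans[OF s6 te_sym[OF te_trans[OF s3[unfolded s4] s5]]])
  next
    assume G20: "G2 = (\<lambda>z b. 0)"
    let ?te = "tensor_eq (\<lambda>b i. b * e' i) (\<lambda>i z. m2'' z (e i)) k"
    define Psi where "Psi = box_id GB' gr'' dh'' G1 G2 ds"
    define \<Phi> where "\<Phi> b y = frag_extend (\<lambda>w. frag_extend (\<lambda>(c, z). frag_of (b * c, z)) (Psi w)) y" for b y
    define \<tau> where "\<tau> a c = signed (hdeg GB' c * (1 + hdegM gr' dh' (F2 X a))) c" for a c
    define \<sigma> where "\<sigma> a c = signed (hdeg GB' c * (1 + (dh x + hdeg GB a - 1))) c" for a c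
    have key: "?te (\<Phi> b y) (frag_of (b, G1 y))" for b y
    proof -
      have "?te (\<Phi> b y) (frag_extend (\<lambda>w. frag_of (b, G1 (frag_of w))) y)"
        unfolding \<Phi>_def
      proof (rule te_frag_extend_cong[OF subset_UNIV])
        fix w :: 'y
        have "frag_extend (\<lambda>(c, z). frag_of (b * c, z)) (Psi w) = frag_of (b, G1 (frag_of w)) +
           (\<Sum>p\<leftarrow>ds. frag_of (b * signed (hdeg GB' (snd p) * (1 + hdegM gr'' dh'' 0)) (snd p), 0))"
          by (simp add: Psi_def box_id_def G20 frag_extend_add frag_extend_sumlist_arg split_beta)
        also have "?te ... (frag_of (b, G1 (frag_of w)) + (\<Sum>p\<leftarrow>ds. 0))"
          by (rule te_add[OF te_refl], rule te_sumlist_cong, rule te_right_zero)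
        finally show "?te (frag_extend (\<lambda>(c, z). frag_of (b * c, z)) (Psi w)) (frag_of (b, G1 (frag_of w)))"
          by simp
      qed
      moreover have "?te (frag_extend (\<lambda>w. frag_of (b, G1 (frag_of w))) y) (frag_of (b, G1 y))"
        by (rule te_ext_lin) (rule G1add)
      ultimately show ?thesis by (rule te_trans)
    qed
    have r1: "typeD_comp Psi (box_id GB' gr' dh' F1 F2 ds) x =
       \<Phi> 1 (F1 X) + (\<Sum>p\<leftarrow>ds. \<Phi> (\<tau> (fst p) (snd p)) (F2 X (fst p)))"
      unfolding typeD_comp_def \<Phi>_def \<tau>_def X_def
      by (simp add: box_id_def frag_extend_add frag_extend_sumlist_arg split_beta)
    have r2: "?te (\<Phi> 1 (F1 X) + (\<Sum>p\<leftarrow>ds. \<Phi> (\<tau> (fst p) (snd p)) (F2 X (fst p))))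
       (frag_of (1, G1 (F1 X)) + (\<Sum>(a,c)\<leftarrow>ds. frag_of (\<sigma> a c, G1 (F2 X a))))"
    proof (rule te_add[OF key], rule te_sumlist_cong)
      fix p assume p: "p \<in> set ds"
      obtain a c where pac: "p = (a, c)" by (cases p)
      have ac: "(a, c) \<in> set ds" using p pac by simp
      obtain q where q: "a \<in> GB q (hdeg GB a)" using dsdeg[OF ac] by blast
      have h: "homogM gr' dh' (gr x + q) (dh x + hdeg GB a - 1) (F2 X a)"
        using F2hom[OF hX q] by simp
      have "?te (\<Phi> (\<tau> a c) (F2 X a)) (frag_of (\<tau> a c, G1 (F2 X a)))" by (rule key)
      also have "?te ... (frag_of (\<sigma> a c, G1 (F2 X a)))"
        unfolding \<tau>_def \<sigma>_def by (rule hsign[OF h]) (simp add: G10)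
      finally show "?te (\<Phi> (\<tau> (fst p) (snd p)) (F2 X (fst p))) ((\<lambda>(a, c). frag_of (\<sigma> a c, G1 (F2 X a))) p)"
        unfolding pac by simp
    qed
    have l1: "?te (box_id GB' gr'' dh'' (ainf_comp1 G1 F1) (ainf_comp2 G1 G2 F1 F2) ds x)
       (frag_of (1, G1 (F1 X)) + (\<Sum>(a,c)\<leftarrow>ds. frag_of (\<sigma> a c, G1 (F2 X a))))"
      unfolding box_id_def ainf_comp1_def ainf_comp2_def G20 X_def[symmetric] add_0_right
    proof (rule te_add[OF te_refl], rule te_sumlist_cong, clarify)
      fix a c assume ac: "(a, c) \<in> set ds"
      obtain q where q: "a \<in> GB q (hdeg GB a)" using dsdeg[OF ac] by blast
      have h: "homogM gr'' dh'' (gr x + q) (dh x + hdeg GB a - 1) (G1 (F2 X a))"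
        using G1hom[OF F2hom[OF hX q]] by simp
      show "?te (frag_of (signed (hdeg GB' c * (1 + hdegM gr'' dh'' (G1 (F2 X a)))) c, G1 (F2 X a)))
          (frag_of (\<sigma> a c, G1 (F2 X a)))"
        unfolding \<sigma>_def by (rule hsign[OF h]) simp
    qed
    show ?thesis
      unfolding Psi_def[symmetric] r1 by (rule te_trans[OF l1 te_sym[OF r2]])
  qed
qed
end
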